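(* Let $L$ be a finite-dimensional Lie algebra over a field $F$. Then $L$ is solvable if and only if every maximal subalgebra of $L$ has an abelian ideal completion.
   Context: For a nonzero subalgebra $X$ of $L$, the strict core $k(X)$ is the sum of all ideals of $L$ that are proper subalgebras of $X$ (it is $0$ if there are none). For a maximal subalgebra $M$ of $L$, a subalgebra $C$ is a completion of $M$ if $C\not\subseteq M$ but every proper subalgebra of $C$ that is an ideal of $L$ is contained in $M$; an ideal completion is a completion that is an ideal of $L$. $M$ has an abelian ideal completion if it has an ideal completion $C$ such that the Lie algebra $C/k(C)$ is abelian. *)

theory Defs
  imports Complex_Main
begin

text \<open>A Lie algebra L over a field F is modelled as the whole type 'b (an additive group)
  with a scalar multiplication scl :: 'a \<Rightarrow> 'b \<Rightarrow> 'b ('a a field) and a bracket br.\<close>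

definition lie_algebra :: "('a::field \<Rightarrow> 'b::ab_group_add \<Rightarrow> 'b) \<Rightarrow> ('b \<Rightarrow> 'b \<Rightarrow> 'b) \<Rightarrow> bool" where
  "lie_algebra scl br \<longleftrightarrow>
     vector_space scl \<and>
     (\<forall>x. Vector_Spaces.linear scl scl (br x)) \<and>
     (\<forall>y. Vector_Spaces.linear scl scl (\<lambda>x. br x y)) \<and>
     (\<forall>x. br x x = 0) \<and>
     (\<forall>x y z. br x (br y z) + br y (br z x) + br z (br x y) = 0)"

definition finite_dim_lie :: "('a::field \<Rightarrow> 'b::ab_group_add \<Rightarrow> 'b) \<Rightarrow> bool" where
  "finite_dim_lie scl \<longleftrightarrow> (\<exists>B. finite B \<and> module.span scl B = UNIV)"

definition lie_subalgebra :: "('a::field \<Rightarrow> 'b::ab_group_add \<Rightarrow> 'b) \<Rightarrow> ('b \<Rightarrow> 'b \<Rightarrow> 'b) \<Rightarrow> 'b set \<Rightarrow> bool" where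
  "lie_subalgebra scl br S \<longleftrightarrow> module.subspace scl S \<and> (\<forall>x\<in>S. \<forall>y\<in>S. br x y \<in> S)"

definition lie_ideal :: "('a::field \<Rightarrow> 'b::ab_group_add \<Rightarrow> 'b) \<Rightarrow> ('b \<Rightarrow> 'b \<Rightarrow> 'b) \<Rightarrow> 'b set \<Rightarrow> bool" where
  "lie_ideal scl br I \<longleftrightarrow> module.subspace scl I \<and> (\<forall>x. \<forall>y\<in>I. br x y \<in> I)"

definition maximal_subalgebra :: "('a::field \<Rightarrow> 'b::ab_group_add \<Rightarrow> 'b) \<Rightarrow> ('b \<Rightarrow> 'b \<Rightarrow> 'b) \<Rightarrow> 'b set \<Rightarrow> bool" where
  "maximal_subalgebra scl br M \<longleftrightarrow> lie_subalgebra scl br M \<and> M \<noteq> UNIV \<and>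
     (\<forall>S. lie_subalgebra scl br S \<and> M \<subseteq> S \<longrightarrow> S = M \<or> S = UNIV)"

text \<open>Strict core: sum (= span of the union) of all ideals of L that are proper subalgebras of X;
  it is {0} if there are none.\<close>
definition strict_core :: "('a::field \<Rightarrow> 'b::ab_group_add \<Rightarrow> 'b) \<Rightarrow> ('b \<Rightarrow> 'b \<Rightarrow> 'b) \<Rightarrow> 'b set \<Rightarrow> 'b set" where
  "strict_core scl br X = module.span scl (\<Union>{I. lie_ideal scl br I \<and> lie_subalgebra scl br I \<and> I \<subset> X})"

definition completion :: "('a::field \<Rightarrow> 'b::ab_group_add \<Rightarrow> 'b) \<Rightarrow> ('b \<Rightarrow> 'b \<Rightarrow> 'b) \<Rightarrow> 'b set \<Rightarrow> 'b set \<Rightarrow> bool" where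
  "completion scl br M C \<longleftrightarrow> lie_subalgebra scl br C \<and> \<not> C \<subseteq> M \<and>
     (\<forall>I. lie_subalgebra scl br I \<and> I \<subset> C \<and> lie_ideal scl br I \<longrightarrow> I \<subseteq> M)"

definition ideal_completion :: "('a::field \<Rightarrow> 'b::ab_group_add \<Rightarrow> 'b) \<Rightarrow> ('b \<Rightarrow> 'b \<Rightarrow> 'b) \<Rightarrow> 'b set \<Rightarrow> 'b set \<Rightarrow> bool" where
  "ideal_completion scl br M C \<longleftrightarrow> completion scl br M C \<and> lie_ideal scl br C"

text \<open>C / k(C) is abelian iff [C,C] \<subseteq> k(C) (k(C) is an ideal of L contained in C).\<close>
definition abelian_mod :: "('b \<Rightarrow> 'b \<Rightarrow> 'b) \<Rightarrow> 'b set \<Rightarrow> 'b set \<Rightarrow> bool" where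
  "abelian_mod br C K \<longleftrightarrow> (\<forall>x\<in>C. \<forall>y\<in>C. br x y \<in> K)"

definition has_abelian_ideal_completion :: "('a::field \<Rightarrow> 'b::ab_group_add \<Rightarrow> 'b) \<Rightarrow> ('b \<Rightarrow> 'b \<Rightarrow> 'b) \<Rightarrow> 'b set \<Rightarrow> bool" where
  "has_abelian_ideal_completion scl br M \<longleftrightarrow>
     (\<exists>C. ideal_completion scl br M C \<and> abelian_mod br C (strict_core scl br C))"

primrec derived_series :: "('a::field \<Rightarrow> 'b::ab_group_add \<Rightarrow> 'b) \<Rightarrow> ('b \<Rightarrow> 'b \<Rightarrow> 'b) \<Rightarrow> nat \<Rightarrow> 'b set" where
  "derived_series scl br 0 = UNIV"
| "derived_series scl br (Suc n) =
     module.span scl {br x y | x y. x \<in> derived_series scl br n \<and> y \<in> derived_series scl br n}"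

definition lie_solvable :: "('a::field \<Rightarrow> 'b::ab_group_add \<Rightarrow> 'b) \<Rightarrow> ('b \<Rightarrow> 'b \<Rightarrow> 'b) \<Rightarrow> bool" where
  "lie_solvable scl br \<longleftrightarrow> (\<exists>n. derived_series scl br n = {0})"

end

theory Submission imports Defs begin

primrec dser :: "('a::field \<Rightarrow> 'b::ab_group_add \<Rightarrow> 'b) \<Rightarrow> ('b \<Rightarrow> 'b \<Rightarrow> 'b) \<Rightarrow> 'b set \<Rightarrow> nat \<Rightarrow> 'b set" where
  "dser scl br S 0 = S"
| "dser scl br S (Suc n) = module.span scl {br x y | x y. x \<in> dser scl br S n \<and> y \<in> dser scl br S n}"

locale lie_fd = finite_dimensional_vector_space scl Basis
  for scl :: "'a::field \<Rightarrow> 'b::ab_group_add \<Rightarrow> 'b" and Basis +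
  fixes br :: "'b \<Rightarrow> 'b \<Rightarrow> 'b"
  assumes lie: "lie_algebra scl br"
begin

abbreviation "ideal I \<equiv> lie_ideal scl br I"
abbreviation "subalg I \<equiv> lie_subalgebra scl br I"

lemma linR: "Vector_Spaces.linear scl scl (br x)" using lie unfolding lie_algebra_def by blast
lemma linL: "Vector_Spaces.linear scl scl (\<lambda>x. br x y)" using lie unfolding lie_algebra_def by blast
lemma alt[simp]: "br x x = 0" using lie unfolding lie_algebra_def by blast
lemma jacobi: "br x (br y z) + br y (br z x) + br z (br x y) = 0" using lie unfolding lie_algebra_def by blast

lemma mhR: "module_hom scl scl (br x)" using linR linear_iff_module_hom by metis
lemma mhL: "module_hom scl scl (\<lambda>x. br x y)" using linL linear_iff_module_hom by metis

lemma br_addR[simp]: "br x (y + z) = br x y + br x z" using module_hom.add[OF mhR] .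
lemma br_addL[simp]: "br (x + y) z = br x z + br y z" using module_hom.add[OF mhL] .
lemma br_scaleR[simp]: "br x (scl c y) = scl c (br x y)" using module_hom.scale[OF mhR] .
lemma br_scaleL[simp]: "br (scl c x) y = scl c (br x y)" using module_hom.scale[OF mhL, of c x y] by simp
lemma br_0R[simp]: "br x 0 = 0" using module_hom.zero[OF mhR] .
lemma br_0L[simp]: "br 0 y = 0" using module_hom.zero[OF mhL, of y] by simp
lemma br_negR[simp]: "br x (- y) = - br x y" using module_hom.neg[OF mhR] .
lemma br_negL[simp]: "br (- x) y = - br x y" using module_hom.neg[OF mhL] by simp
lemma br_diffR[simp]: "br x (y - z) = br x y - br x z" using module_hom.diff[OF mhR] .
lemma br_diffL[simp]: "br (x - y) z = br x z - br y z" using module_hom.diff[OF mhL] by simp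

lemma anti: "br y x = - br x y"
proof -
  have "br (x + y) (x + y) = br x x + br x y + (br y x + br y y)"
    by (simp only: br_addL br_addR add_ac)
  then have "br x y + br y x = 0" by simp
  then show ?thesis by (simp add: eq_neg_iff_add_eq_0 add.commute)
qed

lemma jac2: "br l (br x y) = - br x (br y l) - br y (br l x)"
  using jacobi[of l x y] by (simp add: algebra_simps eq_neg_iff_add_eq_0)

lemma ideal_sub: "ideal I \<Longrightarrow> subspace I" unfolding lie_ideal_def by blast
lemma ideal_br: "ideal I \<Longrightarrow> y \<in> I \<Longrightarrow> br x y \<in> I" unfolding lie_ideal_def by blast
lemma ideal_brL: "ideal I \<Longrightarrow> x \<in> I \<Longrightarrow> br x y \<in> I"
  using ideal_br[of I x y] anti[of x y] subspace_neg[OF ideal_sub, of I "br y x"] by simp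
lemma ideal_subalg: "ideal I \<Longrightarrow> subalg I" unfolding lie_ideal_def lie_subalgebra_def by blast
lemma subalg_sub: "subalg I \<Longrightarrow> subspace I" unfolding lie_subalgebra_def by blast
lemma subalg_br: "subalg I \<Longrightarrow> x \<in> I \<Longrightarrow> y \<in> I \<Longrightarrow> br x y \<in> I" unfolding lie_subalgebra_def by blast

lemma span_brR: assumes "subspace U" "\<forall>y\<in>T. br x y \<in> U" "y \<in> span T" shows "br x y \<in> U"
  using assms(3)
proof (induction rule: span_induct_alt)
  case base then show ?case using assms(1) subspace_0 by simp
next
  case (step c z y) then show ?case using assms subspace_add subspace_scale by simp
qed

lemma span_br: assumes "subspace U" "\<forall>x\<in>S. \<forall>y\<in>T. br x y \<in> U" "x \<in> span S" "y \<in> span T"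
  shows "br x y \<in> U"
  using assms(3)
proof (induction rule: span_induct_alt)
  case base then show ?case using assms(1) subspace_0 by simp
next
  case (step c z x)
  have "br z y \<in> U" using span_brR[OF assms(1) _ assms(4)] step assms(2) by blast
  then show ?case using step assms subspace_add subspace_scale by simp
qed

lemma ideal_span: assumes "\<forall>l. \<forall>g\<in>G. br l g \<in> span G" shows "ideal (span G)"
  unfolding lie_ideal_def using span_brR[of "span G" G] assms by auto

lemma sub_eq: "subspace S \<Longrightarrow> subspace T \<Longrightarrow> S \<subseteq> T \<Longrightarrow> dim T \<le> dim S \<Longrightarrow> S = T"
  using subspace_dim_equal by blast
lemma dim_lt: assumes "subspace S" "subspace T" "S \<subset> T" shows "dim S < dim T"
proof -
  have "span S = S" "span T = T" using assms by simp_all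
  then show ?thesis using dim_psubset[of S T] assms(3) by metis
qed

lemma ex_max: "P S0 \<Longrightarrow> \<exists>S. P S \<and> (\<forall>T. P T \<longrightarrow> dim T \<le> dim S)"
proof -
  assume "P S0"
  moreover have "\<forall>y. P y \<longrightarrow> dim y < Suc dimension" using dim_subset_UNIV le_imp_less_Suc by blast
  ultimately show ?thesis using ex_has_greatest_nat[of P S0 dim "Suc dimension"] by blast
qed
lemma ex_min: "P S0 \<Longrightarrow> \<exists>S. P S \<and> (\<forall>T. P T \<longrightarrow> dim S \<le> dim T)"
  using ex_has_least_nat[of P S0 dim] by blast

lemma exists_maximal: assumes "subalg S" "S \<noteq> UNIV"
  shows "\<exists>M. maximal_subalgebra scl br M \<and> S \<subseteq> M"
proof -
  obtain M where M: "subalg M" "S \<subseteq> M" "M \<noteq> UNIV"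
    and mx: "\<forall>T. subalg T \<and> S \<subseteq> T \<and> T \<noteq> UNIV \<longrightarrow> dim T \<le> dim M"
    using ex_max[of "\<lambda>T. subalg T \<and> S \<subseteq> T \<and> T \<noteq> UNIV" S] assms by blast
  have "maximal_subalgebra scl br M"
    unfolding maximal_subalgebra_def
  proof (intro conjI allI impI M)
    fix T assume T: "subalg T \<and> M \<subseteq> T"
    show "T = M \<or> T = UNIV"
    proof (cases "T = UNIV")
      case False
      then have "dim T \<le> dim M" using mx T M by blast
      then show ?thesis using sub_eq[of M T] T M subalg_sub by blast
    qed simp
  qed
  then show ?thesis using M by blast
qed

lemma dser_mono: "S \<subseteq> T \<Longrightarrow> dser scl br S k \<subseteq> dser scl br T k"
proof (induction k)
  case (Suc k)
  show ?case by simp (rule span_mono, use Suc in blast)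
qed simp

lemma dser_UNIV: "derived_series scl br k = dser scl br UNIV k"
  by (induction k) simp_all

lemma dser_Suc: "dser scl br S (Suc k) = dser scl br (dser scl br S (Suc 0)) k"
  by (induction k) simp_all

lemma core_sub: assumes "completion scl br M C" "subspace M" shows "strict_core scl br C \<subseteq> M"
  unfolding strict_core_def
proof (rule span_minimal)
  show "\<Union>{I. ideal I \<and> subalg I \<and> I \<subset> C} \<subseteq> M" using assms(1) unfolding completion_def by blast
qed (fact assms(2))

lemma comm_ideal: assumes "ideal C"
  shows "ideal (span {br x y | x y. x \<in> C \<and> y \<in> C})" (is "ideal (span ?G)")
proof (rule ideal_span, intro allI ballI)
  fix l g assume "g \<in> ?G"
  then obtain x y where g: "g = br x y" "x \<in> C" "y \<in> C" by blast
  have "br y l \<in> C" using ideal_brL[OF assms g(3)] .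
  then have 1: "br x (br y l) \<in> ?G" using g(2) by blast
  have "br l x \<in> C" using ideal_br[OF assms g(2)] .
  then have 2: "br y (br l x) \<in> ?G" using g(3) by blast
  have "- br x (br y l) - br y (br l x) \<in> span ?G"
    by (rule span_diff[OF span_neg[OF span_base[OF 1]] span_base[OF 2]])
  then show "br l g \<in> span ?G" using g(1) jac2[of l x y] by simp
qed

lemma fwd: assumes "derived_series scl br n = {0}" "maximal_subalgebra scl br M"
  shows "has_abelian_ideal_completion scl br M"
proof -
  have M: "subalg M" "M \<noteq> UNIV" using assms(2) unfolding maximal_subalgebra_def by auto
  have "ideal UNIV" unfolding lie_ideal_def by simp
  then obtain C where C: "ideal C" "\<not> C \<subseteq> M"
    and mn: "\<forall>T. ideal T \<and> \<not> T \<subseteq> M \<longrightarrow> dim C \<le> dim T"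
    using ex_min[of "\<lambda>T. ideal T \<and> \<not> T \<subseteq> M" UNIV] M by blast
  have comp: "completion scl br M C"
    unfolding completion_def
  proof (intro conjI allI impI)
    show "subalg C" using C ideal_subalg by blast
    show "\<not> C \<subseteq> M" by fact
    fix I assume I: "subalg I \<and> I \<subset> C \<and> ideal I"
    then have "dim I < dim C" using dim_lt[of I C] C(1) ideal_sub by blast
    then show "I \<subseteq> M" using mn I by (meson not_le)
  qed
  define D where "D = span {br x y | x y. x \<in> C \<and> y \<in> C}"
  have D: "ideal D" using comm_ideal[OF C(1)] D_def by simp
  have DC: "D \<subseteq> C" unfolding D_def
    by (rule span_minimal) (use C(1) ideal_br ideal_sub in blast)+
  show ?thesis
  proof (cases "D = C")
    case True
    have "dser scl br C k = C" for k
      by (induction k) (use True D_def in auto)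
    then have "C \<subseteq> {0}" using dser_mono[of C UNIV n] assms(1) dser_UNIV[of n] by simp
    moreover have "0 \<in> M" using M(1) subalg_sub subspace_0 by blast
    ultimately have "C \<subseteq> M" by blast
    then show ?thesis using C by blast
  next
    case False
    have "abelian_mod br C (strict_core scl br C)"
      unfolding abelian_mod_def strict_core_def
    proof (intro ballI)
      fix x y assume "x \<in> C" "y \<in> C"
      then have "br x y \<in> D" unfolding D_def by (blast intro: span_base)
      moreover have "D \<in> {I. ideal I \<and> subalg I \<and> I \<subset> C}"
        using D DC False ideal_subalg by blast
      ultimately show "br x y \<in> span (\<Union>{I. ideal I \<and> subalg I \<and> I \<subset> C})"
        by (meson UnionI span_base)
    qed
    then show ?thesis unfolding has_abelian_ideal_completion_def ideal_completion_def
      using comp C by blast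
  qed
qed

lemma it_add[simp]: "(br x ^^ m) (a + b) = (br x ^^ m) a + (br x ^^ m) b" by (induction m) simp_all
lemma it_scale[simp]: "(br x ^^ m) (scl c a) = scl c ((br x ^^ m) a)" by (induction m) simp_all
lemma it_0[simp]: "(br x ^^ m) 0 = 0" by (induction m) simp_all
lemma it_diff[simp]: "(br x ^^ m) (a - b) = (br x ^^ m) a - (br x ^^ m) b" by (induction m) simp_all
lemma it_inv: "(\<forall>v\<in>V. br x v \<in> V) \<Longrightarrow> v \<in> V \<Longrightarrow> (br x ^^ m) v \<in> V" by (induction m) auto
lemma it_ideal: "ideal I \<Longrightarrow> y \<in> I \<Longrightarrow> (br x ^^ m) y \<in> I"
  using it_inv[of I x y m] ideal_br by blast
lemma it_A: "ideal A \<Longrightarrow> x \<in> A \<Longrightarrow> (br x ^^ Suc m) y \<in> A"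
  using ideal_brL by simp

lemma stab: "\<exists>n\<ge>1. \<forall>z. \<exists>w. (br x ^^ n) z = (br x ^^ n) ((br x ^^ n) w)"
proof -
  define R where "R k = range (br x ^^ k)" for k
  have sR: "subspace (R k)" for k
    unfolding subspace_def R_def
  proof (intro conjI ballI allI)
    show "0 \<in> range (br x ^^ k)" by (rule range_eqI[of _ _ 0]) simp
    fix a b assume "a \<in> range (br x ^^ k)" "b \<in> range (br x ^^ k)"
    then obtain a' b' where "a = (br x ^^ k) a'" "b = (br x ^^ k) b'" by blast
    then show "a + b \<in> range (br x ^^ k)" by (metis it_add rangeI)
  next
    fix c a assume "a \<in> range (br x ^^ k)"
    then obtain a' where "a = (br x ^^ k) a'" by blast
    then show "scl c a \<in> range (br x ^^ k)" by (metis it_scale rangeI)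
  qed
  have Rimg: "R (Suc k) = br x ` R k" for k
    unfolding R_def by (simp add: image_comp)
  have RS: "R (Suc k) \<subseteq> R k" for k
    unfolding R_def by (auto simp: funpow_Suc_right simp del: funpow.simps)
  have "\<exists>k. dim (R (Suc k)) = dim (R k)"
  proof (rule ccontr)
    assume "\<not> ?thesis"
    then have lt: "dim (R (Suc k)) < dim (R k)" for k using dim_subset[OF RS[of k]] by (meson le_neq_implies_less)
    have "dim (R k) + k \<le> dim (R 0)" for k
    proof (induction k)
      case (Suc k) then show ?case using lt[of k] by simp
    qed simp
    from this[of "Suc (dim (R 0))"] show False by simp
  qed
  then obtain k where "dim (R (Suc k)) = dim (R k)" by blast
  then have eq: "R (Suc k) = R k" using sub_eq[OF sR sR RS[of k]] by simp
  have Rk: "R (k + j) = R k" for j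
  proof (induction j)
    case (Suc j)
    have "R (k + Suc j) = br x ` R (k + j)" using Rimg[of "k + j"] by simp
    also have "\<dots> = R k" using Suc eq Rimg[of k] by simp
    finally show ?case .
  qed simp
  show ?thesis
  proof (intro exI[of _ "Suc k"] conjI allI)
    fix z
    have "(br x ^^ Suc k) z \<in> R (Suc k)" unfolding R_def by simp
    also have "R (Suc k) = R (Suc k + Suc k)" using Rk[of 1] Rk[of "Suc (Suc k)"] by simp
    finally obtain w where "(br x ^^ Suc k) z = (br x ^^ (Suc k + Suc k)) w" unfolding R_def by blast
    then show "\<exists>w. (br x ^^ Suc k) z = (br x ^^ Suc k) ((br x ^^ Suc k) w)"
      by (metis comp_apply funpow_add)
  qed simp
qed

lemma iter_find:
  assumes inv: "\<And>u. u \<in> V0 \<Longrightarrow> br v u \<in> V0"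
  shows "u \<in> V0 \<Longrightarrow> u \<notin> W \<Longrightarrow> (br v ^^ m) u \<in> W \<Longrightarrow> \<exists>u'\<in>V0. u' \<notin> W \<and> br v u' \<in> W"
proof (induction m arbitrary: u)
  case 0 then show ?case by simp
next
  case (Suc m)
  show ?case
  proof (cases "br v u \<in> W")
    case True then show ?thesis using Suc.prems by blast
  next
    case False
    have "(br v ^^ m) (br v u) \<in> W" using Suc.prems(3) by (simp add: funpow_Suc_right del: funpow.simps)
    then show ?thesis using Suc.IH[of "br v u"] inv[OF Suc.prems(1)] False by blast
  qed
qed

lemma engel:
  assumes N: "ideal N"
  shows "subalg K \<Longrightarrow> N \<subseteq> K \<Longrightarrow> \<forall>x\<in>K. \<forall>y. \<exists>m. (br x ^^ m) y \<in> N \<Longrightarrow> subspace V \<Longrightarrow> subspace W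
    \<Longrightarrow> N \<subseteq> W \<Longrightarrow> W \<subset> V \<Longrightarrow> \<forall>k\<in>K. \<forall>v\<in>V. br k v \<in> V \<Longrightarrow> \<forall>k\<in>K. \<forall>w\<in>W. br k w \<in> W
    \<Longrightarrow> \<exists>v\<in>V. v \<notin> W \<and> (\<forall>k\<in>K. br k v \<in> W)"
proof (induction "dim K" arbitrary: K V W rule: less_induct)
  case (less K V W)
  show ?case
  proof (cases "K \<subseteq> N")
    case True
    obtain v where "v \<in> V" "v \<notin> W" using less.prems(7) by blast
    moreover have "\<forall>k\<in>K. br k v \<in> W" using True N ideal_brL less.prems(6) by blast
    ultimately show ?thesis by blast
  next
    case False
    then have NK: "N \<subset> K" using less.prems(2) by blast
    have "subalg N" using N ideal_subalg by blast
    then obtain H where H: "subalg H" "N \<subseteq> H" "H \<subset> K"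
      and Hmx: "\<forall>T. subalg T \<and> N \<subseteq> T \<and> T \<subset> K \<longrightarrow> dim T \<le> dim H"
      using ex_max[of "\<lambda>T. subalg T \<and> N \<subseteq> T \<and> T \<subset> K" N] NK by blast
    have sK: "subspace K" using less.prems(1) subalg_sub by blast
    have sH: "subspace H" using H subalg_sub by blast
    have dHK: "dim H < dim K" using dim_lt[OF sH sK H(3)] .
    have nilH: "\<forall>x\<in>H. \<forall>y. \<exists>m. (br x ^^ m) y \<in> N" using less.prems(3) H(3) by blast
    have i1: "\<forall>k\<in>H. \<forall>v\<in>K. br k v \<in> K" using subalg_br[OF less.prems(1)] H(3) by blast
    have i2: "\<forall>k\<in>H. \<forall>v\<in>H. br k v \<in> H" using subalg_br[OF H(1)] by blast
    obtain v where v: "v \<in> K" "v \<notin> H" "\<forall>h\<in>H. br h v \<in> H"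
      using less.hyps[OF dHK H(1) H(2) nilH sK sH H(2) H(3) i1 i2] by blast
    define H' where "H' = {h + scl c v | h c. h \<in> H}"
    have sH': "subspace H'"
      unfolding subspace_def H'_def
    proof (intro conjI ballI allI)
      show "0 \<in> {h + scl c v | h c. h \<in> H}"
        using subspace_0[OF sH] by (intro CollectI exI[of _ 0] exI[of _ "0::'a"]) simp
      fix a b assume "a \<in> {h + scl c v | h c. h \<in> H}" "b \<in> {h + scl c v | h c. h \<in> H}"
      then obtain h1 c1 h2 c2 where "a = h1 + scl c1 v" "b = h2 + scl c2 v" "h1 \<in> H" "h2 \<in> H" by blast
      then have "a + b = (h1 + h2) + scl (c1 + c2) v" "h1 + h2 \<in> H"
        using subspace_add[OF sH] by (simp_all add: scale_left_distrib algebra_simps)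
      then show "a + b \<in> {h + scl c v | h c. h \<in> H}" by blast
    next
      fix d a assume "a \<in> {h + scl c v | h c. h \<in> H}"
      then obtain h1 c1 where "a = h1 + scl c1 v" "h1 \<in> H" by blast
      then have "scl d a = scl d h1 + scl (d * c1) v" "scl d h1 \<in> H"
        using subspace_scale[OF sH] by (simp_all add: scale_right_distrib)
      then show "scl d a \<in> {h + scl c v | h c. h \<in> H}" by blast
    qed
    have brH': "br a b \<in> H'" if ab0: "a \<in> H'" "b \<in> H'" for a b
    proof -
      obtain h1 c1 h2 c2 where ab: "a = h1 + scl c1 v" "b = h2 + scl c2 v" "h1 \<in> H" "h2 \<in> H"
        using ab0 unfolding H'_def by blast
      have e: "br a b = br h1 h2 + scl c2 (br h1 v) - scl c1 (br h2 v)"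
        using ab anti[of h2 v] by (simp add: algebra_simps scale_minus_right)
      have "br h1 h2 + scl c2 (br h1 v) - scl c1 (br h2 v) \<in> H"
        using ab v(3) subalg_br[OF H(1)] sH
        by (meson subspace_add subspace_diff subspace_scale)
      then have "br a b = (br h1 h2 + scl c2 (br h1 v) - scl c1 (br h2 v)) + scl 0 v
        \<and> br h1 h2 + scl c2 (br h1 v) - scl c1 (br h2 v) \<in> H" using e by simp
      then show ?thesis unfolding H'_def by blast
    qed
    have HH': "H \<subseteq> H'" unfolding H'_def by (force intro: exI[of _ "0::'a"])
    have vH': "v \<in> H'" unfolding H'_def
      using subspace_0[OF sH] by (intro CollectI exI[of _ 0] exI[of _ "1::'a"]) simp
    have H'K: "H' \<subseteq> K" unfolding H'_def
      using H(3) v(1) sK by (auto intro: subspace_add subspace_scale)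
    have "dim H < dim H'" using dim_lt[OF sH sH'] HH' vH' v(2) by blast
    moreover have "subalg H'" unfolding lie_subalgebra_def using sH' brH' by blast
    ultimately have "\<not> H' \<subset> K" using Hmx H(2) HH' by (meson dual_order.trans not_le)
    then have H'eq: "H' = K" using H'K by blast
    have i3: "\<forall>k\<in>H. \<forall>u\<in>V. br k u \<in> V" using less.prems(8) H(3) by blast
    have i4: "\<forall>k\<in>H. \<forall>w\<in>W. br k w \<in> W" using less.prems(9) H(3) by blast
    obtain v0 where v0: "v0 \<in> V" "v0 \<notin> W" "\<forall>h\<in>H. br h v0 \<in> W"
      using less.hyps[OF dHK H(1) H(2) nilH less.prems(4,5,6,7) i3 i4] by blast
    define V0 where "V0 = {u\<in>V. \<forall>h\<in>H. br h u \<in> W}"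
    have inv: "br v u \<in> V0" if u: "u \<in> V0" for u
    proof -
      have "br v u \<in> V" using u less.prems(8) v(1) unfolding V0_def by blast
      moreover have "br h (br v u) \<in> W" if h: "h \<in> H" for h
      proof -
        have "br h u \<in> W" using u h unfolding V0_def by blast
        then have "- br h u \<in> W" using subspace_neg[OF less.prems(5)] by blast
        moreover have "br u h = - br h u" using anti .
        ultimately have "br u h \<in> W" by simp
        then have 1: "br v (br u h) \<in> W" using less.prems(9) v(1) by blast
        have "br h v \<in> H" using v(3) h by blast
        then have "br (br h v) u \<in> W" using u unfolding V0_def by blast
        then have "- br (br h v) u \<in> W" using subspace_neg[OF less.prems(5)] by blast
        moreover have "br u (br h v) = - br (br h v) u" using anti .
        ultimately have 2: "br u (br h v) \<in> W" by simp
        have "br h (br v u) = - br v (br u h) - br u (br h v)" using jac2 .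
        then show ?thesis using 1 2 less.prems(5) by (metis subspace_diff subspace_neg)
      qed
      ultimately show ?thesis unfolding V0_def by blast
    qed
    obtain m where "(br v ^^ m) v0 \<in> N" using less.prems(3) v(1) by blast
    then have "(br v ^^ m) v0 \<in> W" using less.prems(6) by blast
    moreover have "v0 \<in> V0" using v0 unfolding V0_def by blast
    ultimately obtain u where u: "u \<in> V0" "u \<notin> W" "br v u \<in> W"
      using iter_find[of V0 v, OF inv] v0(2) by blast
    have "br k u \<in> W" if k: "k \<in> K" for k
    proof -
      obtain h c where hc: "k = h + scl c v" "h \<in> H" using k H'eq unfolding H'_def by blast
      have "br h u \<in> W" using u(1) hc(2) unfolding V0_def by blast
      then show ?thesis using hc u(3) less.prems(5) by (simp add: subspace_add subspace_scale)
    qed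
    then show ?thesis using u unfolding V0_def by blast
  qed
qed

lemma ideal_Int: "ideal I \<Longrightarrow> ideal J \<Longrightarrow> ideal (I \<inter> J)"
  unfolding lie_ideal_def using subspace_inter by blast

lemma ideal_0: "ideal {0}" unfolding lie_ideal_def by simp
lemma ideal_UNIV: "ideal UNIV" unfolding lie_ideal_def by simp

lemma leib: "br x (br a b) = br (br x a) b + br a (br x b)"
proof -
  have "br x (br a b) + br a (br b x) + br b (br x a) = 0" by (rule jacobi)
  moreover have "br a (br b x) = - br a (br x b)" using anti[of b x] by simp
  moreover have "br b (br x a) = - br (br x a) b" using anti[of b "br x a"] by simp
  ultimately show ?thesis by (simp add: algebra_simps eq_neg_iff_add_eq_0)
qed

lemma it_zero_mono: "(br x ^^ m) a = 0 \<Longrightarrow> (br x ^^ (j + m)) a = 0"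
  by (simp add: funpow_add)

lemma genker_br: "(br x ^^ p) a = 0 \<Longrightarrow> (br x ^^ q) b = 0 \<Longrightarrow> (br x ^^ (p + q)) (br a b) = 0"
proof (induction "p + q" arbitrary: p q a b rule: less_induct)
  case less
  show ?case
  proof (cases p)
    case 0 then show ?thesis using less.prems by simp
  next
    case (Suc p')
    show ?thesis
    proof (cases q)
      case 0 then show ?thesis using less.prems by simp
    next
      case (Suc q')
      have 1: "(br x ^^ (p' + q)) (br (br x a) b) = 0"
        using less.hyps[of p' q "br x a" b] less.prems \<open>p = Suc p'\<close>
        by (simp add: funpow_Suc_right del: funpow.simps)
      have pq: "p' + q = p + q'" using \<open>p = Suc p'\<close> \<open>q = Suc q'\<close> by simp
      have 2: "(br x ^^ (p' + q)) (br a (br x b)) = 0"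
        unfolding pq using less.hyps[of p q' a "br x b"] less.prems \<open>q = Suc q'\<close>
        by (simp add: funpow_Suc_right del: funpow.simps)
      have "(br x ^^ (p + q)) (br a b) = (br x ^^ (p' + q)) (br x (br a b))"
        using \<open>p = Suc p'\<close> by (simp add: funpow_Suc_right del: funpow.simps)
      also have "\<dots> = (br x ^^ (p' + q)) (br (br x a) b + br a (br x b))"
        by (simp only: leib[of x a b])
      also have "\<dots> = (br x ^^ (p' + q)) (br (br x a) b) + (br x ^^ (p' + q)) (br a (br x b))"
        by (simp only: it_add)
      finally show ?thesis using 1 2 by simp
    qed
  qed
qed

lemma dser_0: "0 \<in> dser scl br S (Suc k)" by (simp add: span_zero)

lemma bwd:
  assumes H: "\<forall>M. maximal_subalgebra scl br M \<longrightarrow> has_abelian_ideal_completion scl br M"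
  shows "\<exists>n. derived_series scl br n = {0}"
proof (rule ccontr)
  assume notsol: "\<not> ?thesis"
  define sol where "sol S \<longleftrightarrow> (\<exists>k. dser scl br S k = {0})" for S
  have "ideal {0} \<and> sol {0}" using ideal_0 unfolding sol_def by (metis dser.simps(1))
  then obtain N where N: "ideal N" "sol N" and Nmx: "\<forall>T. ideal T \<and> sol T \<longrightarrow> dim T \<le> dim N"
    using ex_max[of "\<lambda>T. ideal T \<and> sol T" "{0}"] by blast
  have sN: "subspace N" using N ideal_sub by blast
  have "N \<noteq> UNIV" using N(2) notsol dser_UNIV unfolding sol_def by metis
  then have "ideal UNIV \<and> N \<subset> UNIV" using ideal_UNIV by blast
  then obtain A where A: "ideal A" "N \<subset> A" and Amn: "\<forall>T. ideal T \<and> N \<subset> T \<longrightarrow> dim A \<le> dim T"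
    using ex_min[of "\<lambda>T. ideal T \<and> N \<subset> T" UNIV] by blast
  have sA: "subspace A" using A ideal_sub by blast
  have betw: "J = N \<or> J = A" if J: "ideal J" "N \<subseteq> J" "J \<subseteq> A" for J
  proof (cases "J = N")
    case False
    then have "dim A \<le> dim J" using Amn J by blast
    then show ?thesis using sub_eq[of J A] J ideal_sub sA by blast
  qed simp
  have nonab: "\<exists>a\<in>A. \<exists>b\<in>A. br a b \<notin> N"
  proof (rule ccontr)
    assume "\<not> ?thesis"
    then have "{br x y | x y. x \<in> A \<and> y \<in> A} \<subseteq> N" by blast
    then have "dser scl br A (Suc 0) \<subseteq> N" using sN by (simp add: span_minimal)
    obtain k where k: "dser scl br N k = {0}" using N(2) unfolding sol_def by blast
    have "dser scl br A (Suc k) \<subseteq> dser scl br N k"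
      unfolding dser_Suc[of A k] by (rule dser_mono) fact
    then have "dser scl br A (Suc k) = {0}" using k dser_0[of A k] by blast
    then have "sol A" unfolding sol_def by blast
    then have "dim A \<le> dim N" using Nmx A by blast
    moreover have "dim N < dim A" using dim_lt[OF sN sA A(2)] .
    ultimately show False by simp
  qed
  define G where "G = {br a b | a b. a \<in> A \<and> b \<in> A}"
  have Jid: "ideal (span (G \<union> N))"
  proof (rule ideal_span, intro allI ballI)
    fix l g assume g: "g \<in> G \<union> N"
    show "br l g \<in> span (G \<union> N)"
    proof (cases "g \<in> N")
      case True
      then have "br l g \<in> N" using N(1) ideal_br by blast
      then show ?thesis by (blast intro: span_base)
    next
      case False
      then obtain x y where gg: "g = br x y" "x \<in> A" "y \<in> A" using g unfolding G_def by blast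
      have "br y l \<in> A" using ideal_brL[OF A(1) gg(3)] .
      then have 1: "br x (br y l) \<in> G \<union> N" using gg(2) unfolding G_def by blast
      have "br l x \<in> A" using ideal_br[OF A(1) gg(2)] .
      then have 2: "br y (br l x) \<in> G \<union> N" using gg(3) unfolding G_def by blast
      have "- br x (br y l) - br y (br l x) \<in> span (G \<union> N)"
        by (rule span_diff[OF span_neg[OF span_base[OF 1]] span_base[OF 2]])
      then show ?thesis using gg(1) jac2[of l x y] by simp
    qed
  qed
  have GA: "G \<subseteq> A" unfolding G_def using A(1) ideal_br by blast
  have JA: "span (G \<union> N) \<subseteq> A" using GA A(2) sA by (intro span_minimal) auto
  have NJ: "N \<subseteq> span (G \<union> N)" using span_superset by blast
  have "span (G \<union> N) \<noteq> N"
  proof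
    assume e: "span (G \<union> N) = N"
    obtain a b where "a \<in> A" "b \<in> A" "br a b \<notin> N" using nonab by blast
    moreover have "br a b \<in> G" using \<open>a \<in> A\<close> \<open>b \<in> A\<close> unfolding G_def by blast
    ultimately show False using e span_superset by blast
  qed
  then have JeqA: "span (G \<union> N) = A" using betw[OF Jid NJ JA] by blast
  define Z where "Z = {z. \<forall>a\<in>A. br z a \<in> N}"
  have Zid: "ideal Z"
    unfolding lie_ideal_def
  proof (intro conjI allI ballI)
    show "subspace Z"
    proof (rule subspaceI)
      show "0 \<in> Z" unfolding Z_def using subspace_0[OF sN] by simp
      fix x y c assume "x \<in> Z" "y \<in> Z"
      then show "x + y \<in> Z" unfolding Z_def using subspace_add[OF sN] by simp
    next
      fix c x assume "x \<in> Z"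
      then show "scl c x \<in> Z" unfolding Z_def using subspace_scale[OF sN] by simp
    qed
    fix l z assume z: "z \<in> Z"
    have "br (br l z) a \<in> N" if a: "a \<in> A" for a
    proof -
      have "br z a \<in> N" using z a unfolding Z_def by blast
      then have 1: "br l (br z a) \<in> N" using N(1) ideal_br by blast
      have "br a l \<in> A" using A(1) a ideal_brL by blast
      then have 2: "br z (br a l) \<in> N" using z unfolding Z_def by blast
      have "br a (br l z) = - br l (br z a) - br z (br a l)" by (rule jac2)
      moreover have "- br l (br z a) - br z (br a l) \<in> N"
        using subspace_diff[OF sN subspace_neg[OF sN 1] 2] .
      ultimately have "br a (br l z) \<in> N" by simp
      then have "- br a (br l z) \<in> N" using sN subspace_neg by blast
      moreover have "br (br l z) a = - br a (br l z)" by (rule anti)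
      ultimately show ?thesis by simp
    qed
    then show "br l z \<in> Z" unfolding Z_def by blast
  qed
  have NZ: "N \<subseteq> Z" unfolding Z_def using N(1) ideal_brL by blast
  have ZA: "Z \<inter> A = N"
  proof -
    have "Z \<inter> A = N \<or> Z \<inter> A = A" using betw[OF ideal_Int[OF Zid A(1)]] NZ A(2) by blast
    moreover have "Z \<inter> A \<noteq> A"
    proof
      assume "Z \<inter> A = A"
      then have "\<forall>a\<in>A. \<forall>b\<in>A. br a b \<in> N" unfolding Z_def by blast
      then show False using nonab by blast
    qed
    ultimately show ?thesis by blast
  qed
  have KC: "A \<subseteq> M" if M: "maximal_subalgebra scl br M" "Z \<subseteq> M" for M
  proof (rule ccontr)
    assume nAM: "\<not> A \<subseteq> M"
    have sM: "subspace M" using M(1) unfolding maximal_subalgebra_def using subalg_sub by blast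
    obtain C where comp: "completion scl br M C" and C: "ideal C"
      and cab: "\<forall>x\<in>C. \<forall>y\<in>C. br x y \<in> strict_core scl br C"
      using H M(1) unfolding has_abelian_ideal_completion_def ideal_completion_def abelian_mod_def by blast
    have sC: "subspace C" using C ideal_sub by blast
    have cabM: "\<forall>x\<in>C. \<forall>y\<in>C. br x y \<in> M" using cab core_sub[OF comp sM] by blast
    have CnM: "\<not> C \<subseteq> M" using comp unfolding completion_def by blast
    have compI: "I \<subseteq> M" if "subalg I" "I \<subset> C" "ideal I" for I
      using comp that unfolding completion_def by blast
    have NM: "N \<subseteq> M" using NZ M(2) by blast
    define CN where "CN = {c + n | c n. c \<in> C \<and> n \<in> N}"
    have sCN: "subspace CN" unfolding CN_def using subspace_sums[OF sC sN] .
    have CNid: "ideal CN"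
      unfolding lie_ideal_def
    proof (intro conjI allI ballI sCN)
      fix l y assume "y \<in> CN"
      then obtain c n where "y = c + n" "c \<in> C" "n \<in> N" unfolding CN_def by blast
      moreover have "br l c \<in> C" "br l n \<in> N" using calculation C N(1) ideal_br by blast+
      ultimately have "br l y = br l c + br l n \<and> br l c \<in> C \<and> br l n \<in> N" by simp
      then show "br l y \<in> CN" unfolding CN_def by blast
    qed
    have NCN: "N \<subseteq> CN"
    proof
      fix n assume "n \<in> N" then have "n = 0 + n \<and> 0 \<in> C \<and> n \<in> N" using subspace_0[OF sC] by simp
      then show "n \<in> CN" unfolding CN_def by blast
    qed
    have CCN: "C \<subseteq> CN"
    proof
      fix c assume "c \<in> C" then have "c = c + 0 \<and> c \<in> C \<and> 0 \<in> N" using subspace_0[OF sN] by simp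
      then show "c \<in> CN" unfolding CN_def by blast
    qed
    have "A \<inter> CN = N \<or> A \<inter> CN = A" using betw[OF ideal_Int[OF A(1) CNid]] NCN A(2) by blast
    then show False
    proof
      assume e: "A \<inter> CN = N"
      have "C \<subseteq> Z"
      proof
        fix c assume c: "c \<in> C"
        have "br c a \<in> N" if a: "a \<in> A" for a
        proof -
          have "br c a \<in> A" using A(1) a ideal_br by blast
          moreover have "br c a \<in> C" using C c ideal_brL by blast
          ultimately show ?thesis using e CCN by blast
        qed
        then show "c \<in> Z" unfolding Z_def by blast
      qed
      then show False using CnM M(2) by blast
    next
      assume e: "A \<inter> CN = A"
      then have ACN: "A \<subseteq> CN" by blast
      show False
      proof (cases "A = CN")
        case True
        have "G \<subseteq> M"
        proof
          fix g assume "g \<in> G"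
          then obtain a b where ab: "g = br a b" "a \<in> CN" "b \<in> CN" unfolding G_def using True by blast
          then obtain c n c' n' where cn: "a = c + n" "b = c' + n'" "c \<in> C" "n \<in> N" "c' \<in> C" "n' \<in> N"
            unfolding CN_def by blast
          have 1: "br c c' \<in> M" using cabM cn by blast
          have 2: "br c n' \<in> M" "br n c' \<in> M" "br n n' \<in> M"
            using cn N(1) ideal_br ideal_brL NM by blast+
          have "g = br c c' + br c n' + (br n c' + br n n')" using ab cn by (simp add: algebra_simps)
          moreover have "br c c' + br c n' + (br n c' + br n n') \<in> M"
            using subspace_add[OF sM subspace_add[OF sM 1 2(1)] subspace_add[OF sM 2(2) 2(3)]] .
          ultimately show "g \<in> M" by simp
        qed
        then have "span (G \<union> N) \<subseteq> M" using NM sM by (intro span_minimal) auto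
        then show False using JeqA nAM by blast
      next
        case False
        have "\<not> C \<subseteq> A"
        proof
          assume "C \<subseteq> A"
          then have "CN \<subseteq> A" unfolding CN_def using A(2) sA subspace_add by blast
          then show False using False ACN by blast
        qed
        then have "A \<inter> C \<subset> C" by blast
        moreover have "ideal (A \<inter> C)" using ideal_Int[OF A(1) C] .
        ultimately have ACM: "A \<inter> C \<subseteq> M" using compI ideal_subalg by blast
        have "A \<subseteq> M"
        proof
          fix a assume a: "a \<in> A"
          then obtain c n where cn: "a = c + n" "c \<in> C" "n \<in> N" using ACN unfolding CN_def by blast
          have "c = a - n" using cn by simp
          then have "c \<in> A" using a cn(3) A(2) sA subspace_diff by blast
          then have "c \<in> M" using ACM cn(2) by blast
          then show "a \<in> M" using cn NM sM subspace_add by blast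
        qed
        then show False using nAM by blast
      qed
    qed
  qed
  have SA: "S = UNIV" if S: "subalg S" "Z \<subseteq> S" "\<forall>y. \<exists>s\<in>S. \<exists>a\<in>A. y = s + a" for S
  proof (rule ccontr)
    assume "S \<noteq> UNIV"
    then obtain M where M: "maximal_subalgebra scl br M" "S \<subseteq> M" using exists_maximal[OF S(1)] by blast
    then have AM: "A \<subseteq> M" using KC S(2) by blast
    have sM: "subspace M" using M(1) unfolding maximal_subalgebra_def using subalg_sub by blast
    have "M = UNIV"
    proof -
      have "y \<in> M" for y
      proof -
        obtain s a where "s \<in> S" "a \<in> A" "y = s + a" using S(3) by blast
        then show ?thesis using M(2) AM subspace_add[OF sM, of s a] by blast
      qed
      then show ?thesis by blast
    qed
    then show False using M(1) unfolding maximal_subalgebra_def by blast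
  qed
  have nil: "\<forall>y. \<exists>m. (br x ^^ m) y \<in> N" if xA: "x \<in> A" for x
  proof
    fix y0
    obtain n where n: "n \<ge> 1" "\<forall>z. \<exists>w. (br x ^^ n) z = (br x ^^ n) ((br x ^^ n) w)"
      using stab by blast
    define Gk where "Gk = {k. \<exists>m. (br x ^^ m) k = 0}"
    define S where "S = {k + z | k z. k \<in> Gk \<and> z \<in> Z}"
    have sZ: "subspace Z" using Zid ideal_sub by blast
    have sGk: "subspace Gk"
    proof (rule subspaceI)
      show "0 \<in> Gk" unfolding Gk_def by (rule CollectI, rule exI[of _ 0]) simp
      fix a b assume "a \<in> Gk" "b \<in> Gk"
      then obtain p q where "(br x ^^ p) a = 0" "(br x ^^ q) b = 0" unfolding Gk_def by blast
      then have "(br x ^^ (q + p)) a = 0" "(br x ^^ (p + q)) b = 0" using it_zero_mono by blast+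
      then have "(br x ^^ (p + q)) (a + b) = 0" by (simp add: add.commute)
      then show "a + b \<in> Gk" unfolding Gk_def by blast
    next
      fix c a assume "a \<in> Gk"
      then obtain p where "(br x ^^ p) a = 0" unfolding Gk_def by blast
      then have "(br x ^^ p) (scl c a) = 0" by simp
      then show "scl c a \<in> Gk" unfolding Gk_def by blast
    qed
    have sS: "subspace S" unfolding S_def using subspace_sums[OF sGk sZ] .
    have brS: "br a b \<in> S" if ab: "a \<in> S" "b \<in> S" for a b
    proof -
      obtain k1 z1 k2 z2 where kz: "a = k1 + z1" "b = k2 + z2" "k1 \<in> Gk" "k2 \<in> Gk" "z1 \<in> Z" "z2 \<in> Z"
        using ab unfolding S_def by blast
      obtain p q where "(br x ^^ p) k1 = 0" "(br x ^^ q) k2 = 0" using kz unfolding Gk_def by blast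
      then have "br k1 k2 \<in> Gk" unfolding Gk_def using genker_br by blast
      moreover have "br k1 z2 + br z1 k2 + br z1 z2 \<in> Z"
        using kz Zid ideal_br ideal_brL sZ by (meson subspace_add)
      moreover have "br a b = br k1 k2 + (br k1 z2 + br z1 k2 + br z1 z2)"
        using kz by (simp add: algebra_simps)
      ultimately show ?thesis unfolding S_def by blast
    qed
    have ZS: "Z \<subseteq> S"
    proof
      fix z assume "z \<in> Z" then have "z = 0 + z \<and> 0 \<in> Gk \<and> z \<in> Z" using subspace_0[OF sGk] by simp
      then show "z \<in> S" unfolding S_def by blast
    qed
    have split: "\<exists>s\<in>S. \<exists>a\<in>A. y = s + a" for y
    proof -
      obtain w where w: "(br x ^^ n) y = (br x ^^ n) ((br x ^^ n) w)" using n(2) by blast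
      have "(br x ^^ n) (y - (br x ^^ n) w) = 0" using w by simp
      then have "y - (br x ^^ n) w \<in> Gk" unfolding Gk_def by blast
      then have "y - (br x ^^ n) w \<in> S" using ZS sS subspace_0[OF sZ] unfolding S_def by force
      moreover have "(br x ^^ n) w \<in> A" using it_A[OF A(1) xA, of "n - 1"] n(1) by simp
      ultimately show ?thesis by (metis diff_add_cancel)
    qed
    have "subalg S" unfolding lie_subalgebra_def using sS brS by blast
    then have "S = UNIV" using SA ZS split by blast
    then obtain k z where kz: "y0 = k + z" "k \<in> Gk" "z \<in> Z" unfolding S_def by blast
    then obtain m where m: "(br x ^^ m) k = 0" unfolding Gk_def by blast
    then have k0: "(br x ^^ Suc m) k = 0" by simp
    have "(br x ^^ Suc m) z \<in> Z" using it_ideal[OF Zid kz(3)] .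
    moreover have "(br x ^^ Suc m) z \<in> A" using it_A[OF A(1) xA] .
    ultimately have zN: "(br x ^^ Suc m) z \<in> N" using ZA by blast
    have "(br x ^^ Suc m) y0 = (br x ^^ Suc m) k + (br x ^^ Suc m) z"
      unfolding kz(1) by (rule it_add)
    then have "(br x ^^ Suc m) y0 \<in> N" using k0 zN by simp
    then show "\<exists>m. (br x ^^ m) y0 \<in> N" by blast
  qed
  have iA: "\<forall>k\<in>A. \<forall>v\<in>A. br k v \<in> A" using A(1) ideal_br by blast
  have iN: "\<forall>k\<in>A. \<forall>w\<in>N. br k w \<in> N" using N(1) ideal_br by blast
  obtain v where v: "v \<in> A" "v \<notin> N" "\<forall>k\<in>A. br k v \<in> N"
    using engel[OF N(1) ideal_subalg[OF A(1)] _ _ sA sN order.refl A(2) iA iN] A(2) nil by blast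
  have "br v k \<in> N" if "k \<in> A" for k
  proof -
    have "- br k v \<in> N" using v(3) that sN subspace_neg by blast
    moreover have "br v k = - br k v" by (rule anti)
    ultimately show ?thesis by simp
  qed
  then have "v \<in> Z \<inter> A" unfolding Z_def using v(1) by blast
  then show False using ZA v(2) by blast
qed

end

theorem theorem2p10:
  fixes scl :: "'a::field \<Rightarrow> 'b::ab_group_add \<Rightarrow> 'b" and br :: "'b \<Rightarrow> 'b \<Rightarrow> 'b"
  assumes "lie_algebra scl br" and "finite_dim_lie scl"
  shows "lie_solvable scl br \<longleftrightarrow>
    (\<forall>M. maximal_subalgebra scl br M \<longrightarrow> has_abelian_ideal_completion scl br M)"
proof -
  have vs: "vector_space scl" using assms(1) unfolding lie_algebra_def by blast
  obtain B0 where B0: "finite B0" "module.span scl B0 = UNIV"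
    using assms(2) unfolding finite_dim_lie_def by blast
  obtain B where B: "\<not> module.dependent scl B" "UNIV \<subseteq> module.span scl B"
    using vector_space.basis_exists[OF vs, of UNIV] by metis
  have "B \<subseteq> module.span scl B0" using B0(2) by simp
  then have fB: "finite B" using vector_space.independent_span_bound[OF vs B0(1) B(1)] by blast
  have sB: "module.span scl B = UNIV" using B(2) by blast
  have fd: "finite_dimensional_vector_space scl B"
    by (rule finite_dimensional_vector_space.intro[OF vs finite_dimensional_vector_space_axioms.intro[OF fB B(1) sB]])
  have "lie_fd scl B br"
    by (rule lie_fd.intro[OF fd lie_fd_axioms.intro[OF assms(1)]])
  then interpret lie_fd scl B br .
  show ?thesis unfolding lie_solvable_def
  proof
    assume "\<exists>n. derived_series scl br n = {0}"
    then obtain n where "derived_series scl br n = {0}" by blast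
    then show "\<forall>M. maximal_subalgebra scl br M \<longrightarrow> has_abelian_ideal_completion scl br M"
      using fwd by blast
  next
    assume "\<forall>M. maximal_subalgebra scl br M \<longrightarrow> has_abelian_ideal_completion scl br M"
    then show "\<exists>n. derived_series scl br n = {0}" by (rule bwd)
  qed
qed

end
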